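(* Let $G=(V,E)$ be a simple undirected graph with $V=[n]$ and let $k\ge1$ be an integer. Let $Y\in\mathbb S^{nk}$, viewed as a $k\times k$ array of $n\times n$ blocks $Y^{rl}$ ($r,l\in[k]$), satisfy $Y^{rr}_{ij}=0$ for all $\{i,j\}\in E$, $r\in[k]$; $Y^{rl}_{ii}=0$ for all $i\in[n]$, $r,l\in[k]$, $r\ne l$; $Y\ge0$ entrywise; and $\begin{bmatrix}1&\mathrm{diag}(Y)^{\top}\\ \mathrm{diag}(Y)&Y\end{bmatrix}\succeq0$. Then $\sum_{r\in[k]}Y^{rr}_{ii}\le 1$ for every $i\in[n]$.
   Context: $\mathbb S^m$ denotes real symmetric $m\times m$ matrices; $\mathrm{diag}(Y)$ is the vector of diagonal entries; $\succeq0$ is positive semidefiniteness. *)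

theory Defs
  imports "HOL-Analysis.Analysis"
begin

definition sym_mat :: "real^'a^'a \<Rightarrow> bool" where
  "sym_mat M \<longleftrightarrow> transpose M = M"

definition psd :: "real^'a^'a \<Rightarrow> bool" where
  "psd M \<longleftrightarrow> sym_mat M \<and> (\<forall>x. 0 \<le> x \<bullet> (M *v x))"

text \<open>The bordered matrix [1, diag(Y)^T; diag(Y), Y], index None is the extra row/column.\<close>
definition bordered :: "real^'a^'a \<Rightarrow> real^('a option)^('a option)" where
  "bordered Y = (\<chi> p q. case (p, q) of
      (None, None) \<Rightarrow> 1
    | (None, Some b) \<Rightarrow> Y $ b $ b
    | (Some a, None) \<Rightarrow> Y $ a $ a
    | (Some a, Some b) \<Rightarrow> Y $ a $ b)"

end

theory Submission
  imports Defs
begin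

lemma sum_option_UNIV:
  fixes f :: "'a::finite option \<Rightarrow> real"
  shows "(\<Sum>p\<in>UNIV. f p) = f None + (\<Sum>a\<in>UNIV. f (Some a))"
proof -
  have "(UNIV :: 'a option set) = insert None (range Some)"
    by (auto intro: option.exhaust)
  then have "(\<Sum>p\<in>UNIV. f p) = (\<Sum>p\<in>insert None (range Some). f p)" by simp
  also have "\<dots> = f None + (\<Sum>p\<in>range Some. f p)" by (subst sum.insert) auto
  also have "(\<Sum>p\<in>range Some. f p) = (\<Sum>a\<in>UNIV. f (Some a))"
    by (subst sum.reindex) (auto simp: inj_on_def)
  finally show ?thesis .
qed

lemma sum_pair_sel:
  fixes g :: "'k::finite \<Rightarrow> 'n::finite \<Rightarrow> real"
  shows "(\<Sum>q\<in>UNIV. (case q of (l, j) \<Rightarrow> if j = i then g l j else 0)) = (\<Sum>l\<in>UNIV. g l i)"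
proof -
  have "(\<Sum>q\<in>UNIV. (case q of (l, j) \<Rightarrow> if j = i then g l j else 0))
      = (\<Sum>l\<in>UNIV. \<Sum>j\<in>UNIV. (if j = i then g l j else 0))"
    by (subst UNIV_Times_UNIV[symmetric], subst sum.cartesian_product[symmetric]) simp
  also have "\<dots> = (\<Sum>l\<in>UNIV. g l i)" by simp
  finally show ?thesis .
qed

theorem lemma1:
  fixes E :: "'n::finite \<Rightarrow> 'n \<Rightarrow> bool"
    and Y :: "real^('k::finite \<times> 'n)^('k \<times> 'n)"
  assumes E_sym: "\<And>i j. E i j \<Longrightarrow> E j i"
    and E_irrefl: "\<And>i. \<not> E i i"
    and Y_sym: "sym_mat Y"
    and edge: "\<And>i j r. E i j \<Longrightarrow> Y $ (r, i) $ (r, j) = 0"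
    and offdiag: "\<And>i r l. r \<noteq> l \<Longrightarrow> Y $ (r, i) $ (l, i) = 0"
    and nonneg: "\<And>p q. 0 \<le> Y $ p $ q"
    and psd: "psd (bordered Y)"
  shows "\<forall>i. (\<Sum>r\<in>UNIV. Y $ (r, i) $ (r, i)) \<le> 1"
proof
  fix i :: 'n
  define S where "S = (\<Sum>r\<in>UNIV. Y $ (r, i) $ (r, i))"
  define x :: "real^('k \<times> 'n) option" where
    "x = (\<chi> p. case p of None \<Rightarrow> - S | Some (r, j) \<Rightarrow> if j = i then 1 else 0)"
  let ?M = "bordered Y"
  have xN: "x $ None = - S" and xS: "\<And>r j. x $ Some (r, j) = (if j = i then 1 else 0)"
    by (simp_all add: x_def)
  have S0: "0 \<le> S" unfolding S_def by (intro sum_nonneg nonneg)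
  have v0: "(?M *v x) $ None = 0"
  proof -
    have "(?M *v x) $ None = (\<Sum>q\<in>UNIV. ?M $ None $ q * x $ q)"
      by (simp add: matrix_vector_mult_def)
    also have "\<dots> = - S + (\<Sum>q\<in>UNIV. (case q of (l, j) \<Rightarrow> if j = i then Y $ (l,j) $ (l,j) else 0))"
      by (subst sum_option_UNIV) (auto simp: bordered_def x_def intro!: sum.cong split: prod.splits)
    also have "\<dots> = 0" by (subst sum_pair_sel) (simp add: S_def)
    finally show ?thesis .
  qed
  have vS: "(?M *v x) $ Some (r, i) = Y $ (r, i) $ (r, i) - S * Y $ (r, i) $ (r, i)" for r
  proof -
    have "(?M *v x) $ Some (r, i) = (\<Sum>q\<in>UNIV. ?M $ Some (r, i) $ q * x $ q)"
      by (simp add: matrix_vector_mult_def)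
    also have "\<dots> = - S * Y $ (r, i) $ (r, i) + (\<Sum>q\<in>UNIV. (case q of (l, j) \<Rightarrow> if j = i then Y $ (r,i) $ (l,j) else 0))"
      by (subst sum_option_UNIV) (auto simp: bordered_def x_def intro!: sum.cong split: prod.splits)
    also have "(\<Sum>q\<in>UNIV. (case q of (l, j) \<Rightarrow> if j = i then Y $ (r,i) $ (l,j) else 0)) = (\<Sum>l\<in>UNIV. Y $ (r,i) $ (l,i))"
      by (rule sum_pair_sel)
    also have "\<dots> = Y $ (r, i) $ (r, i)"
      by (subst sum.remove[of _ r]) (auto simp: offdiag intro!: sum.neutral)
    finally show ?thesis by simp
  qed
  have "x \<bullet> (?M *v x) = (\<Sum>p\<in>UNIV. x $ p * (?M *v x) $ p)"
    by (simp add: inner_vec_def)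
  also have "\<dots> = (\<Sum>q\<in>UNIV. (case q of (l, j) \<Rightarrow> if j = i then Y $ (l,j) $ (l,j) - S * Y $ (l,j) $ (l,j) else 0))"
  proof (subst sum_option_UNIV, simp only: v0 mult_zero_right add_0_left, rule sum.cong[OF refl])
    fix q :: "'k \<times> 'n"
    obtain l j where q: "q = (l, j)" by fastforce
    show "x $ Some q * (?M *v x) $ Some q = (case q of (l, j) \<Rightarrow> if j = i then Y $ (l,j) $ (l,j) - S * Y $ (l,j) $ (l,j) else 0)"
    proof (cases "j = i")
      case True
      show ?thesis unfolding q True by (simp only: xS vS refl if_True prod.case mult_1_left simp_thms)
    next
      case False
      show ?thesis unfolding q by (simp only: xS False if_False prod.case mult_zero_left)
    qed
  qed
  also have "\<dots> = (\<Sum>l\<in>UNIV. Y $ (l,i) $ (l,i) - S * Y $ (l,i) $ (l,i))"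
    by (rule sum_pair_sel)
  also have "\<dots> = S - S * S"
    by (simp add: S_def sum_subtractf sum_distrib_left)
  finally have eq: "x \<bullet> (?M *v x) = S - S * S" .
  have "0 \<le> x \<bullet> (?M *v x)" using psd unfolding psd_def by blast
  then have h: "S * S \<le> S * 1" using eq by simp
  show "S \<le> 1"
  proof (cases "S = 0")
    case False
    then have "0 < S" using S0 by simp
    then show ?thesis using h by (simp add: mult_le_cancel_left_pos)
  qed simp
qed

end
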